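(* Let $G=(V,E)$ be a (directed) graph with all edges of unit length, let $r\ge0$ be an integer, and let $H=(V,E')$ with $E'\subseteq E$. Then $H$ is an $r$-fault tolerant $2$-spanner of $G$ if and only if for every $(u,v)\in E$, either $(u,v)\in E'$ or there are at least $r+1$ paths of length $2$ from $u$ to $v$ in $E'$.
   Context: $d_H$ denotes the (directed) shortest-path distance in $H$ with unit edge lengths. For $F\subseteq V$, $G\setminus F$ denotes $G$ with the vertices of $F$ and incident edges removed. $H$ is an $r$-fault tolerant $2$-spanner of $G$ if for every $F\subseteq V$ with $|F|\le r$ and all $u,v\in V\setminus F$, $d_{H\setminus F}(u,v)\le 2\,d_{G\setminus F}(u,v)$. Paths of length 2 from $u$ to $v$ are distinguished by their middle vertex. *)

theory Defs
  imports Main "HOL-Library.Extended_Nat"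
begin

definition remove_vertices :: "('a \<times> 'a) set \<Rightarrow> 'a set \<Rightarrow> ('a \<times> 'a) set" where
  "remove_vertices E F = {(x, y). (x, y) \<in> E \<and> x \<notin> F \<and> y \<notin> F}"

(* directed shortest-path distance with unit edge lengths; infinity if unreachable *)
definition dist :: "('a \<times> 'a) set \<Rightarrow> 'a \<Rightarrow> 'a \<Rightarrow> enat" where
  "dist E u v = (INF n \<in> {n. (u, v) \<in> E ^^ n}. enat n)"

definition ft_2spanner :: "'a set \<Rightarrow> ('a \<times> 'a) set \<Rightarrow> ('a \<times> 'a) set \<Rightarrow> nat \<Rightarrow> bool" where
  "ft_2spanner V E E' r \<longleftrightarrow>
     (\<forall>F. F \<subseteq> V \<longrightarrow> card F \<le> r \<longrightarrow>
        (\<forall>u \<in> V - F. \<forall>v \<in> V - F.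
           dist (remove_vertices E' F) u v \<le> 2 * dist (remove_vertices E F) u v))"

(* paths of length 2 from u to v in E', identified by their middle vertex *)
definition two_paths :: "('a \<times> 'a) set \<Rightarrow> 'a \<Rightarrow> 'a \<Rightarrow> 'a set" where
  "two_paths E' u v = {w. (u, w) \<in> E' \<and> (w, v) \<in> E'}"

end

theory Submission
  imports Defs
begin

lemma dist_le_iff: "dist E u v \<le> enat k \<longleftrightarrow> (\<exists>n\<le>k. (u,v) \<in> E ^^ n)"
proof
  assume "\<exists>n\<le>k. (u,v) \<in> E ^^ n"
  then obtain n where "n \<le> k" "(u,v) \<in> E ^^ n" by blast
  then have "dist E u v \<le> enat n" unfolding dist_def by (auto intro: INF_lower2)
  with \<open>n \<le> k\<close> show "dist E u v \<le> enat k" by (meson enat_ord_simps(1) order_trans)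
next
  assume a: "dist E u v \<le> enat k"
  let ?A = "enat ` {n. (u, v) \<in> E ^^ n}"
  have ne: "?A \<noteq> {}"
  proof
    assume "?A = {}" then have "dist E u v = \<infinity>" unfolding dist_def by (simp add: Inf_enat_def)
    with a show False by simp
  qed
  have "dist E u v \<in> ?A" unfolding dist_def using ne
    by (simp add: Inf_enat_def del: image_is_empty) (metis (no_types, lifting) LeastI ex_in_conv)
  then obtain n where "(u,v) \<in> E ^^ n" "dist E u v = enat n" by blast
  with a show "\<exists>n\<le>k. (u,v) \<in> E ^^ n" by auto
qed

lemma dist_attained: "dist E u v = enat d \<Longrightarrow> (u,v) \<in> E ^^ d"
proof -
  assume d: "dist E u v = enat d"
  then obtain n where n: "n \<le> d" "(u,v) \<in> E ^^ n" using dist_le_iff[of E u v d] by auto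
  have "dist E u v \<le> enat n" unfolding dist_def using n by (auto intro: INF_lower2)
  with d n have "n = d" by simp
  with n show ?thesis by simp
qed

lemma lift_paths:
  fixes R S :: "('a \<times> 'a) set"
  assumes h: "\<And>x y. (x,y)\<in>R \<Longrightarrow> (\<exists>k\<le>2. (x,y)\<in> S^^k)"
  shows "(u,v)\<in>R^^n \<Longrightarrow> \<exists>m\<le>2*n. (u,v) \<in> S^^m"
proof (induction n arbitrary: v)
  case 0
  then have "u = v" by simp
  then have "(u,v) \<in> S ^^ 0" by simp
  then show ?case by blast
next
  case (Suc n)
  then obtain z where z: "(u,z)\<in>R^^n" "(z,v)\<in>R" by auto
  obtain m where m: "m\<le>2*n" "(u,z)\<in>S^^m" using Suc.IH z(1) by blast
  obtain k where k: "k\<le>2" "(z,v)\<in>S^^k" using h z(2) by blast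
  have "(u,v) \<in> S^^(m+k)" using m k by (auto simp: relpow_add)
  moreover have "m+k \<le> 2 * Suc n" using m k by simp
  ultimately show ?case by blast
qed

theorem lemma3p1:
  fixes V :: "'a set" and E E' :: "('a \<times> 'a) set" and r :: nat
  assumes "finite V"
    and "E \<subseteq> V \<times> V"
    and "\<forall>x. (x, x) \<notin> E"
    and "E' \<subseteq> E"
  shows "ft_2spanner V E E' r \<longleftrightarrow>
           (\<forall>(u, v) \<in> E. (u, v) \<in> E' \<or> card (two_paths E' u v) \<ge> r + 1)"
proof
  assume sp: "ft_2spanner V E E' r"
  have main: "card (two_paths E' u v) \<ge> r + 1" if uv: "(u,v) \<in> E" and nE': "(u,v) \<notin> E'" for u v
    proof (rule ccontr)
      assume nc: "\<not> ?thesis"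
      define F where "F = two_paths E' u v"
      have FV: "F \<subseteq> V" using assms(2,4) unfolding F_def two_paths_def by auto
      have cF: "card F \<le> r" using nc F_def by simp
      have uF: "u \<notin> F" "v \<notin> F" using assms(3,4) unfolding F_def two_paths_def by auto
      have uvV: "u \<in> V" "v \<in> V" using uv assms(2) by auto
      have "(u,v) \<in> remove_vertices E F ^^ 1" using uv uF unfolding remove_vertices_def by auto
      then have d1: "dist (remove_vertices E F) u v \<le> enat 1"
        by (intro dist_le_iff[THEN iffD2]) blast
      have d2: "dist (remove_vertices E' F) u v \<le> 2 * dist (remove_vertices E F) u v"
      proof -
        have "\<forall>u \<in> V - F. \<forall>v \<in> V - F.
           dist (remove_vertices E' F) u v \<le> 2 * dist (remove_vertices E F) u v"
          using sp FV cF unfolding ft_2spanner_def by simp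
        moreover have "u \<in> V - F" "v \<in> V - F" using uF uvV by auto
        ultimately show ?thesis by simp
      qed
      have d3: "dist (remove_vertices E' F) u v \<le> enat 2"
      proof -
        from d1 have "2 * dist (remove_vertices E F) u v \<le> 2 * enat 1"
          by (intro mult_left_mono) auto
        then show ?thesis using d2 by (simp add: one_enat_def numeral_eq_enat)
      qed
      then obtain n where n: "n \<le> 2" "(u,v) \<in> remove_vertices E' F ^^ n" using dist_le_iff[THEN iffD1, OF d3] by blast
      have "n = 0 \<or> n = 1 \<or> n = 2" using n(1) by auto
      then show False
      proof (elim disjE)
        assume "n = 0" then show False using n uv assms(3) by auto
      next
        assume "n = 1" then show False using n nE' unfolding remove_vertices_def by auto
      next
        assume "n = 2"
        then obtain w where "(u,w) \<in> remove_vertices E' F" "(w,v) \<in> remove_vertices E' F"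
          using n by (auto simp: numeral_2_eq_2)
        then show False unfolding remove_vertices_def F_def two_paths_def by auto
      qed
    qed
  then show "\<forall>(u, v) \<in> E. (u, v) \<in> E' \<or> card (two_paths E' u v) \<ge> r + 1" by blast
next
  assume c: "\<forall>(u, v) \<in> E. (u, v) \<in> E' \<or> card (two_paths E' u v) \<ge> r + 1"
  show "ft_2spanner V E E' r" unfolding ft_2spanner_def
  proof (intro allI impI ballI)
    fix F u v assume FV: "F \<subseteq> V" and cF: "card F \<le> r" and u: "u \<in> V - F" and v: "v \<in> V - F"
    have finF: "finite F" using FV assms(1) finite_subset by blast
    have h: "\<exists>k\<le>2. (x,y) \<in> remove_vertices E' F ^^ k" if xy: "(x,y) \<in> remove_vertices E F" for x y
    proof -
      have xyE: "(x,y) \<in> E" "x \<notin> F" "y \<notin> F" using xy unfolding remove_vertices_def by auto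
      show ?thesis
      proof (cases "(x,y) \<in> E'")
        case True
        then have "(x,y) \<in> remove_vertices E' F ^^ 1" using xyE unfolding remove_vertices_def by auto
        then show ?thesis by (intro exI[of _ 1]) auto
      next
        case False
        then have "card (two_paths E' x y) \<ge> r + 1" using c xyE(1) by auto
        then have "\<not> two_paths E' x y \<subseteq> F"
        proof (intro notI)
          assume "two_paths E' x y \<subseteq> F"
          then have "card (two_paths E' x y) \<le> card F" by (rule card_mono[OF finF])
          with cF \<open>card (two_paths E' x y) \<ge> r + 1\<close> show False by linarith
        qed
        then obtain w where "w \<in> two_paths E' x y" "w \<notin> F" by blast
        then have "(x,w) \<in> remove_vertices E' F" "(w,y) \<in> remove_vertices E' F"
          using xyE unfolding two_paths_def remove_vertices_def by auto
        then have "(x,y) \<in> remove_vertices E' F ^^ 2" by (auto simp: numeral_2_eq_2)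
        then show ?thesis by blast
      qed
    qed
    show "dist (remove_vertices E' F) u v \<le> 2 * dist (remove_vertices E F) u v"
    proof (cases "dist (remove_vertices E F) u v")
      case (enat d)
      then have "(u,v) \<in> remove_vertices E F ^^ d" by (rule dist_attained)
      then obtain m where "m \<le> 2*d" "(u,v) \<in> remove_vertices E' F ^^ m"
        using lift_paths[OF h] by blast
      then have "dist (remove_vertices E' F) u v \<le> enat (2*d)" by (intro dist_le_iff[THEN iffD2]) blast
      then show ?thesis using enat by (simp add: numeral_eq_enat)
    next
      case infinity then show ?thesis by (simp add: imult_infinity_right)
    qed
  qed
qed

end
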